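(* Let $\mathcal{M}$ be a graph matroid family with rank function $r$. (a) $\mathcal{M}$ is unbounded if and only if every forest is $\mathcal{M}$-independent. (b) If $\mathcal{M}$ is bounded, then the graph consisting of $r(\mathcal{M})+1$ pairwise vertex-disjoint edges is an $\mathcal{M}$-circuit.
   Context: All graphs are finite and simple and have no isolated vertices. A graph matroid family $\mathcal{M}$ assigns to every graph $G$ a matroid $\mathcal{M}(G)$ on $E(G)$ such that (i) every graph isomorphism $V(G)\to V(H)$ induces an isomorphism $\mathcal{M}(G)\to\mathcal{M}(H)$, and (ii) for every subgraph $H$ of $G$, $\mathcal{M}(H)$ is the restriction of $\mathcal{M}(G)$ to $E(H)$. $r(G)$ is the rank of $\mathcal{M}(G)$. $G$ is $\mathcal{M}$-independent if $r(G)=|E(G)|$; an $\mathcal{M}$-circuit is a graph $C$ with $r(C)<|E(C)|$ and $r(C-e)=|E(C)|-1$ for all edges $e$. $\mathcal{M}$ is unbounded if $r(K_n)$ is unbounded in $n$, and bounded otherwise; in the bounded case $r(\mathcal{M})=\lim_n r(K_n)$. *)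

theory Defs
  imports Complex_Main
begin

text \<open>Graphs are finite simple graphs without isolated vertices, on vertices from nat.
  Its vertex set is the union of its edges.\<close>

type_synonym graph = "nat set set"

definition is_graph :: "graph \<Rightarrow> bool" where
  "is_graph G \<longleftrightarrow> finite G \<and> (\<forall>e\<in>G. card e = 2)"

definition matroid :: "'a set \<Rightarrow> ('a set \<Rightarrow> bool) \<Rightarrow> bool" where
  "matroid E indep \<longleftrightarrow>
     finite E \<and> indep {} \<and>
     (\<forall>X. indep X \<longrightarrow> X \<subseteq> E) \<and>
     (\<forall>X Y. indep X \<longrightarrow> Y \<subseteq> X \<longrightarrow> indep Y) \<and>
     (\<forall>X Y. indep X \<longrightarrow> indep Y \<longrightarrow> card X < card Y \<longrightarrow>
        (\<exists>e\<in>Y - X. indep (insert e X)))"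

definition mrank :: "('a set \<Rightarrow> bool) \<Rightarrow> 'a set \<Rightarrow> nat" where
  "mrank indep X = Max (card ` {Y. Y \<subseteq> X \<and> indep Y})"

definition graph_matroid_family :: "(graph \<Rightarrow> nat set set \<Rightarrow> bool) \<Rightarrow> bool" where
  "graph_matroid_family M \<longleftrightarrow>
     (\<forall>G. is_graph G \<longrightarrow> matroid G (M G)) \<and>
     (\<forall>G H (f :: nat \<Rightarrow> nat). is_graph G \<longrightarrow> is_graph H \<longrightarrow>
        bij_betw f (\<Union>G) (\<Union>H) \<longrightarrow> (\<lambda>e. f ` e) ` G = H \<longrightarrow>
        (\<forall>X. X \<subseteq> G \<longrightarrow> (M G X \<longleftrightarrow> M H ((\<lambda>e. f ` e) ` X)))) \<and>
     (\<forall>G H. is_graph G \<longrightarrow> H \<subseteq> G \<longrightarrow>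
        (\<forall>X. X \<subseteq> H \<longrightarrow> (M H X \<longleftrightarrow> M G X)))"

definition gm_rank :: "(graph \<Rightarrow> nat set set \<Rightarrow> bool) \<Rightarrow> graph \<Rightarrow> nat" where
  "gm_rank M G = mrank (M G) G"

definition gm_independent :: "(graph \<Rightarrow> nat set set \<Rightarrow> bool) \<Rightarrow> graph \<Rightarrow> bool" where
  "gm_independent M G \<longleftrightarrow> gm_rank M G = card G"

definition gm_circuit :: "(graph \<Rightarrow> nat set set \<Rightarrow> bool) \<Rightarrow> graph \<Rightarrow> bool" where
  "gm_circuit M C \<longleftrightarrow> gm_rank M C < card C \<and>
     (\<forall>e\<in>C. gm_rank M (C - {e}) = card C - 1)"

definition complete_graph :: "nat \<Rightarrow> graph" where
  "complete_graph n = {{i, j} | i j. i < n \<and> j < n \<and> i \<noteq> j}"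

definition gm_unbounded :: "(graph \<Rightarrow> nat set set \<Rightarrow> bool) \<Rightarrow> bool" where
  "gm_unbounded M \<longleftrightarrow> \<not> bdd_above (range (\<lambda>n. gm_rank M (complete_graph n)))"

text \<open>In the bounded case, r(M) is the limit of r(K_n).\<close>

definition gm_family_rank :: "(graph \<Rightarrow> nat set set \<Rightarrow> bool) \<Rightarrow> nat" where
  "gm_family_rank M = lim (\<lambda>n. gm_rank M (complete_graph n))"

definition forest :: "graph \<Rightarrow> bool" where
  "forest F \<longleftrightarrow> is_graph F \<and>
     \<not> (\<exists>vs. length vs \<ge> 3 \<and> distinct vs \<and>
           (\<forall>i < length vs. {vs ! i, vs ! ((i + 1) mod length vs)} \<in> F))"

end

theory Submission
  imports Defs
begin


definition cgr :: "nat set \<Rightarrow> graph" where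
  "cgr T = {{i, j} | i j. i \<in> T \<and> j \<in> T \<and> i \<noteq> j}"

lemma complete_graph_cgr: "complete_graph n = cgr {0..<n}"
  unfolding complete_graph_def cgr_def by auto

lemma mem_cgr: "e \<in> cgr T \<longleftrightarrow> e \<subseteq> T \<and> card e = 2"
  unfolding cgr_def by (auto simp: card_2_iff)

lemma is_graph_cgr: "finite T \<Longrightarrow> is_graph (cgr T)"
proof -
  assume "finite T"
  have "cgr T \<subseteq> Pow T" by (auto simp: mem_cgr)
  then show ?thesis using \<open>finite T\<close> unfolding is_graph_def
    by (auto simp: mem_cgr intro: finite_subset)
qed

lemma cgr_mono: "S \<subseteq> T \<Longrightarrow> cgr S \<subseteq> cgr T" unfolding subset_iff mem_cgr by blast

lemma is_graph_subset: "is_graph G \<Longrightarrow> H \<subseteq> G \<Longrightarrow> is_graph H"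
  unfolding is_graph_def by (auto intro: finite_subset)

lemma is_graph_Un: "is_graph G \<Longrightarrow> is_graph H \<Longrightarrow> is_graph (G \<union> H)"
  unfolding is_graph_def by auto

lemma is_graph_insert: "is_graph G \<Longrightarrow> card e = 2 \<Longrightarrow> is_graph (insert e G)"
  unfolding is_graph_def by auto

lemma is_graph_finite_Union: "is_graph G \<Longrightarrow> finite (\<Union>G)"
  unfolding is_graph_def by (metis card.infinite finite_Union zero_neq_numeral)

lemma edge_2: "is_graph G \<Longrightarrow> e \<in> G \<Longrightarrow> \<exists>x y. e = {x,y} \<and> x \<noteq> y"
  unfolding is_graph_def by (meson card_2_iff)

lemma matroid_finite: "matroid E ind \<Longrightarrow> finite E" unfolding matroid_def by (elim conjE)
lemma matroid_empty: "matroid E ind \<Longrightarrow> ind {}" unfolding matroid_def by (elim conjE)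

lemma mrank_basics:
  assumes "matroid E ind" "X \<subseteq> E"
  shows "finite {Y. Y \<subseteq> X \<and> ind Y}" "{Y. Y \<subseteq> X \<and> ind Y} \<noteq> {}"
proof -
  have "finite X" using assms matroid_finite finite_subset by blast
  moreover have "{Y. Y \<subseteq> X \<and> ind Y} \<subseteq> Pow X" by auto
  ultimately show "finite {Y. Y \<subseteq> X \<and> ind Y}" by (meson finite_Pow_iff finite_subset)
  show "{Y. Y \<subseteq> X \<and> ind Y} \<noteq> {}" using matroid_empty[OF assms(1)] by auto
qed

lemma mrank_ge:
  assumes "matroid E ind" "X \<subseteq> E" "J \<subseteq> X" "ind J"
  shows "card J \<le> mrank ind X"
  unfolding mrank_def using mrank_basics[OF assms(1,2)] assms(3,4) by (auto intro!: Max_ge)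

lemma mrank_attained:
  assumes "matroid E ind" "X \<subseteq> E"
  obtains B where "B \<subseteq> X" "ind B" "card B = mrank ind X"
proof -
  have "mrank ind X \<in> card ` {Y. Y \<subseteq> X \<and> ind Y}"
    unfolding mrank_def using mrank_basics[OF assms] by (intro Max_in) auto
  then show ?thesis using that by auto
qed

lemma mrank_le_card:
  assumes "matroid E ind" "X \<subseteq> E"
  shows "mrank ind X \<le> card X"
proof -
  obtain B where "B \<subseteq> X" "ind B" "card B = mrank ind X" using mrank_attained[OF assms] .
  moreover have "finite X" using assms matroid_finite finite_subset by blast
  ultimately show ?thesis by (metis card_mono)
qed

lemma mrank_mono:
  assumes "matroid E ind" "Y \<subseteq> E" "X \<subseteq> Y"
  shows "mrank ind X \<le> mrank ind Y"
proof -
  obtain B where "B \<subseteq> X" "ind B" "card B = mrank ind X"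
    using mrank_attained[OF assms(1), of X] assms by blast
  then show ?thesis using mrank_ge[OF assms(1,2), of B] assms(3) by auto
qed

lemma matroid_sub: assumes "matroid E ind" "ind X" "Y \<subseteq> X" shows "ind Y"
proof -
  have "\<forall>X Y. ind X \<longrightarrow> Y \<subseteq> X \<longrightarrow> ind Y" using assms(1) unfolding matroid_def by (elim conjE) assumption
  then show ?thesis using assms(2,3) by simp
qed
lemma matroid_aug:
  assumes "matroid E ind" "ind X" "ind Y" "card X < card Y"
  obtains e where "e \<in> Y - X" "ind (insert e X)"
proof -
  have "\<forall>X Y. ind X \<longrightarrow> ind Y \<longrightarrow> card X < card Y \<longrightarrow>
        (\<exists>e\<in>Y - X. ind (insert e X))" using assms(1) unfolding matroid_def by (elim conjE) assumption
  then show ?thesis using assms(2-4) that by blast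
qed
lemma matroid_indep_finite: assumes "matroid E ind" "ind X" shows "finite X"
proof -
  have "\<forall>X. ind X \<longrightarrow> X \<subseteq> E" using assms(1) unfolding matroid_def by (elim conjE) assumption
  then have "X \<subseteq> E" using assms(2) by simp
  then show ?thesis using matroid_finite[OF assms(1)] by (rule finite_subset)
qed

lemma mrank_extend:
  assumes "matroid E ind" "X \<subseteq> E" "J \<subseteq> X" "ind J"
  obtains B where "J \<subseteq> B" "B \<subseteq> X" "ind B" "card B = mrank ind X"
proof -
  let ?P = "{B. J \<subseteq> B \<and> B \<subseteq> X \<and> ind B}"
  have fin: "finite ?P" using mrank_basics(1)[OF assms(1,2)] by (rule finite_subset[rotated]) auto
  have ne: "?P \<noteq> {}" using assms by auto
  have "Max (card ` ?P) \<in> card ` ?P" using fin ne by (intro Max_in) auto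
  then obtain B where B: "B \<in> ?P" "card B = Max (card ` ?P)" by auto
  have maxB: "card B' \<le> card B" if "B' \<in> ?P" for B'
    using B(2) fin that by (simp add: Max_ge)
  have "card B = mrank ind X"
  proof (rule ccontr)
    assume "card B \<noteq> mrank ind X"
    moreover have "card B \<le> mrank ind X" using mrank_ge[OF assms(1,2)] B(1) by auto
    ultimately have lt: "card B < mrank ind X" by simp
    obtain K where K: "K \<subseteq> X" "ind K" "card K = mrank ind X"
      using mrank_attained[OF assms(1,2)] by blast
    obtain e where e: "e \<in> K - B" "ind (insert e B)"
      using matroid_aug[OF assms(1), of B K] B(1) K lt by auto
    have "insert e B \<in> ?P" using e K B(1) by auto
    then have "card (insert e B) \<le> card B" by (rule maxB)
    moreover have "finite B" using matroid_indep_finite[OF assms(1)] B(1) by auto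
    ultimately show False using e by simp
  qed
  then show ?thesis using that B(1) by auto
qed

lemma mrank_union_span:
  assumes "matroid E ind" "X \<union> Y \<subseteq> E" "\<forall>e\<in>Y. mrank ind (insert e X) = mrank ind X"
  shows "mrank ind (X \<union> Y) = mrank ind X"
proof (rule ccontr)
  assume neq: "mrank ind (X \<union> Y) \<noteq> mrank ind X"
  have "mrank ind X \<le> mrank ind (X \<union> Y)" using mrank_mono[OF assms(1,2)] by auto
  with neq have lt: "mrank ind X < mrank ind (X \<union> Y)" by simp
  obtain B where B: "B \<subseteq> X" "ind B" "card B = mrank ind X"
    using mrank_attained[OF assms(1), of X] assms(2) by blast
  obtain J where J: "J \<subseteq> X \<union> Y" "ind J" "card J = mrank ind (X \<union> Y)"
    using mrank_attained[OF assms(1,2)] by blast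
  obtain e where e: "e \<in> J - B" "ind (insert e B)"
    using matroid_aug[OF assms(1) B(2) J(2)] B(3) J(3) lt by auto
  have finB: "finite B" using matroid_indep_finite[OF assms(1) B(2)] .
  have cardI: "card (insert e B) = mrank ind X + 1" using e finB B(3) by simp
  show False
  proof (cases "e \<in> X")
    case True
    then have "card (insert e B) \<le> mrank ind X"
      using mrank_ge[OF assms(1), of X "insert e B"] assms(2) B(1) e(2) by auto
    then show False using cardI by simp
  next
    case False
    then have eY: "e \<in> Y" using e J by auto
    have "insert e X \<subseteq> E" using assms(2) eY by auto
    then have "card (insert e B) \<le> mrank ind (insert e X)"
      using mrank_ge[OF assms(1), of "insert e X" "insert e B"] B(1) e(2) by auto
    then show False using cardI assms(3) eY by simp
  qed
qed

lemma mrank_span_mono: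
  assumes "matroid E ind" "insert e X \<subseteq> E" "A \<subseteq> X" "mrank ind (insert e A) = mrank ind A"
  shows "mrank ind (insert e X) = mrank ind X"
proof (rule ccontr)
  assume neq: "mrank ind (insert e X) \<noteq> mrank ind X"
  have XE: "X \<subseteq> E" "A \<subseteq> E" "insert e A \<subseteq> E" using assms by auto
  have "mrank ind X \<le> mrank ind (insert e X)" using mrank_mono[OF assms(1,2)] by auto
  with neq have lt: "mrank ind X < mrank ind (insert e X)" by simp
  obtain BA where BA: "BA \<subseteq> A" "ind BA" "card BA = mrank ind A"
    using mrank_attained[OF assms(1) XE(2)] by blast
  obtain B where B: "BA \<subseteq> B" "B \<subseteq> X" "ind B" "card B = mrank ind X"
    using mrank_extend[OF assms(1) XE(1), of BA] BA assms(3) by blast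
  obtain J where J: "J \<subseteq> insert e X" "ind J" "card J = mrank ind (insert e X)"
    using mrank_attained[OF assms(1,2)] by blast
  obtain f where f: "f \<in> J - B" "ind (insert f B)"
    using matroid_aug[OF assms(1) B(3) J(2)] B(4) J(3) lt by auto
  have finB: "finite B" using matroid_indep_finite[OF assms(1) B(3)] .
  show False
  proof (cases "f \<in> X")
    case True
    then have "card (insert f B) \<le> mrank ind X"
      using mrank_ge[OF assms(1) XE(1), of "insert f B"] B(2) f(2) by auto
    then show False using f finB B(4) by simp
  next
    case False
    then have fe: "f = e" using f J by auto
    have eB: "e \<notin> BA" using f fe B(1) by auto
    have "insert e BA \<subseteq> insert f B" using fe B(1) by auto
    then have i: "ind (insert e BA)" by (rule matroid_sub[OF assms(1) f(2)])
    have "card (insert e BA) \<le> mrank ind (insert e A)"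
      using mrank_ge[OF assms(1) XE(3) _ i] BA(1) by auto
    moreover have "finite BA" using matroid_indep_finite[OF assms(1) BA(2)] .
    ultimately show False using eB BA(3) assms(4) by simp
  qed
qed



locale gmf =
  fixes M :: "graph \<Rightarrow> nat set set \<Rightarrow> bool"
  assumes gmf: "graph_matroid_family M"
begin

lemma mat: "is_graph G \<Longrightarrow> matroid G (M G)"
  using gmf unfolding graph_matroid_family_def by (elim conjE) blast

lemma restr: "is_graph G \<Longrightarrow> H \<subseteq> G \<Longrightarrow> X \<subseteq> H \<Longrightarrow> M H X = M G X"
proof -
  assume a: "is_graph G" "H \<subseteq> G" "X \<subseteq> H"
  have "\<forall>G H. is_graph G \<longrightarrow> H \<subseteq> G \<longrightarrow> (\<forall>X. X \<subseteq> H \<longrightarrow> (M H X \<longleftrightarrow> M G X))"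
    using gmf unfolding graph_matroid_family_def by (elim conjE) assumption
  then show ?thesis using a by blast
qed

lemma iso: "is_graph G \<Longrightarrow> is_graph H \<Longrightarrow> bij_betw f (\<Union>G) (\<Union>H) \<Longrightarrow> (\<lambda>e. f ` e) ` G = H \<Longrightarrow> X \<subseteq> G
   \<Longrightarrow> M G X = M H ((\<lambda>e. f ` e) ` X)"
proof -
  assume a: "is_graph G" "is_graph H" "bij_betw f (\<Union>G) (\<Union>H)" "(\<lambda>e. f ` e) ` G = H" "X \<subseteq> G"
  have "\<forall>G H (f :: nat \<Rightarrow> nat). is_graph G \<longrightarrow> is_graph H \<longrightarrow>
        bij_betw f (\<Union>G) (\<Union>H) \<longrightarrow> (\<lambda>e. f ` e) ` G = H \<longrightarrow>
        (\<forall>X. X \<subseteq> G \<longrightarrow> (M G X \<longleftrightarrow> M H ((\<lambda>e. f ` e) ` X)))"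
    using gmf unfolding graph_matroid_family_def by (elim conjE) assumption
  then show ?thesis using a by blast
qed

lemma rank_eq: assumes "is_graph G" "X \<subseteq> G" shows "gm_rank M X = mrank (M G) X"
proof -
  have "{Y. Y \<subseteq> X \<and> M X Y} = {Y. Y \<subseteq> X \<and> M G Y}" using restr[OF assms] by auto
  then show ?thesis unfolding gm_rank_def mrank_def by simp
qed

lemma g_le_card: "is_graph X \<Longrightarrow> gm_rank M X \<le> card X"
  unfolding gm_rank_def using mrank_le_card[OF mat] by blast

lemma g_mono: assumes "is_graph Y" "X \<subseteq> Y" shows "gm_rank M X \<le> gm_rank M Y"
proof -
  have "gm_rank M X = mrank (M Y) X" using rank_eq[OF assms] .
  also have "\<dots> \<le> mrank (M Y) Y" using mrank_mono[OF mat[OF assms(1)] order_refl assms(2)] .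
  also have "\<dots> = gm_rank M Y" unfolding gm_rank_def ..
  finally show ?thesis .
qed

lemma g_empty: "gm_rank M {} = 0"
proof -
  have "is_graph {}" unfolding is_graph_def by simp
  then show ?thesis using g_le_card[of "{}"] by simp
qed

lemma g_R3:
  assumes "is_graph X" "is_graph Y" "\<forall>e\<in>Y. gm_rank M (insert e X) = gm_rank M X"
  shows "gm_rank M (X \<union> Y) = gm_rank M X"
proof -
  let ?G = "X \<union> Y"
  have G: "is_graph ?G" using is_graph_Un[OF assms(1,2)] .
  have m: "matroid ?G (M ?G)" using mat[OF G] .
  have "\<forall>e\<in>Y. mrank (M ?G) (insert e X) = mrank (M ?G) X"
    using assms(3) rank_eq[OF G] by (metis Un_iff insert_subset sup_ge1)
  then have "mrank (M ?G) (X \<union> Y) = mrank (M ?G) X" using mrank_union_span[OF m order_refl] by blast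
  then show ?thesis using rank_eq[OF G] by simp
qed

lemma g_span_mono:
  assumes "is_graph X" "A \<subseteq> X" "card e = 2" "gm_rank M (insert e A) = gm_rank M A"
  shows "gm_rank M (insert e X) = gm_rank M X"
proof -
  let ?G = "insert e X"
  have G: "is_graph ?G" using is_graph_insert[OF assms(1,3)] .
  have m: "matroid ?G (M ?G)" using mat[OF G] .
  have "mrank (M ?G) (insert e A) = mrank (M ?G) A"
  proof -
    have "insert e A \<subseteq> ?G" "A \<subseteq> ?G" using assms(2) by auto
    then show ?thesis using assms(4) rank_eq[OF G, of "insert e A"] rank_eq[OF G, of A] by simp
  qed
  then have "mrank (M ?G) (insert e X) = mrank (M ?G) X"
    using mrank_span_mono[OF m order_refl assms(2)] by blast
  moreover have "X \<subseteq> ?G" by auto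
  ultimately show ?thesis using rank_eq[OF G, of X] rank_eq[OF G, of ?G] by simp
qed

lemma g_img:
  assumes "is_graph X" "inj_on g (\<Union>X)"
  shows "is_graph ((\<lambda>e. g ` e) ` X)" "gm_rank M ((\<lambda>e. g ` e) ` X) = gm_rank M X"
proof -
  let ?H = "(\<lambda>e. g ` e) ` X"
  have ce: "card (g ` e) = card e" if "e \<in> X" for e
    using card_image[OF inj_on_subset[OF assms(2)]] that by blast
  show H: "is_graph ?H"
    using assms(1) ce unfolding is_graph_def by auto
  have bij: "bij_betw g (\<Union>X) (\<Union>?H)" using assms(2) unfolding bij_betw_def by auto
  have eq: "M X Y = M ?H ((\<lambda>e. g ` e) ` Y)" if "Y \<subseteq> X" for Y
    using iso[OF assms(1) H bij refl that] .
  have injP: "inj_on (\<lambda>e. g ` e) X"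
    using inj_on_image_Pow[OF assms(2)] by (rule inj_on_subset) auto
  have sets: "{Z. Z \<subseteq> ?H \<and> M ?H Z} = (\<lambda>Y. (\<lambda>e. g ` e) ` Y) ` {Y. Y \<subseteq> X \<and> M X Y}"
  proof (intro equalityI subsetI)
    fix Z assume "Z \<in> {Z. Z \<subseteq> ?H \<and> M ?H Z}"
    then have Z: "Z \<subseteq> ?H" "M ?H Z" by auto
    let ?Y = "{e \<in> X. g ` e \<in> Z}"
    have YZ: "(\<lambda>e. g ` e) ` ?Y = Z" using Z(1) by auto
    have "M X ?Y = M ?H ((\<lambda>e. g ` e) ` ?Y)" by (rule eq) auto
    then have "M X ?Y" using Z(2) YZ by simp
    show "Z \<in> (\<lambda>Y. (\<lambda>e. g ` e) ` Y) ` {Y. Y \<subseteq> X \<and> M X Y}"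
    proof (rule image_eqI)
      show "Z = (\<lambda>e. g ` e) ` ?Y" using YZ by simp
    qed (use \<open>M X ?Y\<close> in auto)
  next
    fix Z assume "Z \<in> (\<lambda>Y. (\<lambda>e. g ` e) ` Y) ` {Y. Y \<subseteq> X \<and> M X Y}"
    then obtain Y where "Y \<subseteq> X" "M X Y" "Z = (\<lambda>e. g ` e) ` Y" by auto
    moreover have "M X Y = M ?H ((\<lambda>e. g ` e) ` Y)" using eq \<open>Y \<subseteq> X\<close> by blast
    ultimately show "Z \<in> {Z. Z \<subseteq> ?H \<and> M ?H Z}" by auto
  qed
  have "card ` {Z. Z \<subseteq> ?H \<and> M ?H Z} = card ` {Y. Y \<subseteq> X \<and> M X Y}"
    unfolding sets image_image
    by (intro image_cong refl) (auto intro!: card_image inj_on_subset[OF injP])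
  then show "gm_rank M ?H = gm_rank M X" unfolding gm_rank_def mrank_def by simp
qed

lemma circuit_exists:
  "is_graph F \<Longrightarrow> gm_rank M F \<noteq> card F \<Longrightarrow>
   \<exists>C \<subseteq> F. C \<noteq> {} \<and> gm_rank M C \<noteq> card C \<and> (\<forall>e\<in>C. gm_rank M (C - {e}) = card (C - {e}))"
proof (induction "card F" arbitrary: F rule: less_induct)
  case less
  show ?case
  proof (cases "\<forall>e\<in>F. gm_rank M (F - {e}) = card (F - {e})")
    case True
    have "F \<noteq> {}" using less.prems g_empty by auto
    then show ?thesis using True less.prems by blast
  next
    case False
    then obtain e where e: "e \<in> F" "gm_rank M (F - {e}) \<noteq> card (F - {e})" by blast
    have "finite F" using less.prems unfolding is_graph_def by simp
    then have "card (F - {e}) < card F" using e(1) by (meson card_Diff1_less)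
    from less.hyps[OF this is_graph_subset[OF less.prems(1)] e(2)] obtain C where
      "C \<subseteq> F - {e}" "C \<noteq> {}" "gm_rank M C \<noteq> card C" "\<forall>e\<in>C. gm_rank M (C - {e}) = card (C - {e})"
      by blast
    then show ?thesis by blast
  qed
qed

lemma circuit_span:
  assumes "is_graph C" "gm_rank M C \<noteq> card C" "\<forall>e\<in>C. gm_rank M (C - {e}) = card (C - {e})" "e \<in> C"
  shows "gm_rank M (insert e (C - {e})) = gm_rank M (C - {e})"
proof -
  have ins: "insert e (C - {e}) = C" using assms(4) by auto
  have fin: "finite C" using assms(1) unfolding is_graph_def by simp
  have "gm_rank M C < card C" using g_le_card[OF assms(1)] assms(2) by simp
  moreover have "card (C - {e}) = card C - 1" using assms(4) fin by simp
  moreover have "gm_rank M (C - {e}) \<le> gm_rank M C" using g_mono[OF assms(1)] by auto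
  ultimately show ?thesis using ins assms(3,4) by simp
qed

lemma span_img:
  assumes "is_graph C" "e0 \<in> C" "gm_rank M (insert e0 (C - {e0})) = gm_rank M (C - {e0})"
    "inj_on g (\<Union>C)"
  shows "gm_rank M (insert (g ` e0) ((\<lambda>e. g ` e) ` (C - {e0}))) = gm_rank M ((\<lambda>e. g ` e) ` (C - {e0}))"
proof -
  have "insert (g ` e0) ((\<lambda>e. g ` e) ` (C - {e0})) = (\<lambda>e. g ` e) ` C" using assms(2) by auto
  moreover have "gm_rank M ((\<lambda>e. g ` e) ` C) = gm_rank M C" using g_img[OF assms(1,4)] by simp
  moreover have "gm_rank M ((\<lambda>e. g ` e) ` (C - {e0})) = gm_rank M (C - {e0})"
    using g_img(2)[OF is_graph_subset[OF assms(1)] inj_on_subset[OF assms(4)]] by blast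
  moreover have "insert e0 (C - {e0}) = C" using assms(2) by auto
  ultimately show ?thesis using assms(3) by simp
qed

end



context gmf
begin

lemma matching_bound:
  assumes C: "is_graph C" "pairwise disjnt C" "e0 \<in> C"
    and sp: "gm_rank M (insert e0 (C - {e0})) = gm_rank M (C - {e0})"
  shows "gm_rank M (complete_graph n) \<le> card C - 1"
proof -
  define D0 where "D0 = C - {e0}"
  obtain u v where e0: "e0 = {u,v}" "u \<noteq> v" using edge_2[OF C(1,3)] by blast
  have D0g: "is_graph D0" using C(1) is_graph_subset D0_def by auto
  have dj: "d \<inter> e0 = {}" if "d \<in> D0" for d
    using C(2) C(3) that unfolding D0_def pairwise_def disjnt_def by auto
  have uv: "u \<notin> \<Union>D0" "v \<notin> \<Union>D0" using dj e0(1) by auto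
  have UC: "\<Union>C = insert u (insert v (\<Union>D0))" using C(3) e0 D0_def by auto
  have cl1: "gm_rank M (insert {a,b} ((\<lambda>e. g ` e) ` D0)) = gm_rank M ((\<lambda>e. g ` e) ` D0)"
    if "inj_on g (\<Union>C)" "g u = a" "g v = b" for g a b
    using span_img[OF C(1) C(3) sp that(1)] that e0 D0_def by simp
  have cl2: "gm_rank M (insert {a,b} D0) = gm_rank M D0" if "a \<noteq> b" "a \<notin> \<Union>D0" "b \<notin> \<Union>D0" for a b
  proof -
    define g where "g = id(u := a, v := b)"
    have "inj_on g (\<Union>C)" unfolding UC g_def using that uv e0(2) by (auto simp: inj_on_def)
    moreover have "(\<lambda>e. g ` e) ` D0 = D0"
    proof -
      have "g ` d = d" if "d \<in> D0" for d
      proof -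
        have "\<forall>x\<in>d. g x = x" using that uv unfolding g_def by auto
        then show ?thesis by simp
      qed
      then show ?thesis by simp
    qed
    ultimately show ?thesis using cl1[of g a b] e0(2) unfolding g_def by simp
  qed
  have all: "gm_rank M (insert {a,b} D0) = gm_rank M D0" if "a \<noteq> b" for a b
  proof -
    define m where "m = Max (insert a (insert b (\<Union>C))) + 1"
    have fin: "finite (insert a (insert b (\<Union>C)))" using C(1) is_graph_finite_Union by auto
    have big: "x < m" if "x \<in> insert a (insert b (\<Union>C))" for x
      using Max_ge[OF fin that] m_def by simp
    have bigD: "x < m" if "x \<in> \<Union>D0" for x using big that D0_def by auto
    define \<sigma> where "\<sigma> = (\<lambda>x::nat. x + m)"
    define D1 where "D1 = (\<lambda>e. \<sigma> ` e) ` D0"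
    have inj\<sigma>: "inj_on \<sigma> A" for A unfolding \<sigma>_def by (auto simp: inj_on_def)
    have D1g: "is_graph D1" using g_img(1)[OF D0g inj\<sigma>] D1_def by simp
    have UD1: "x \<ge> m" if "x \<in> \<Union>D1" for x using that unfolding D1_def \<sigma>_def by auto
    have step1: "\<forall>d\<in>D1. gm_rank M (insert d D0) = gm_rank M D0"
    proof
      fix d assume "d \<in> D1"
      then obtain d' where d': "d' \<in> D0" "d = \<sigma> ` d'" unfolding D1_def by auto
      then obtain x y where xy: "d' = {x,y}" "x \<noteq> y" using edge_2[OF D0g] by blast
      have d: "d = {x+m, y+m}" using d' xy \<sigma>_def by auto
      have "x + m \<notin> \<Union>D0" "y + m \<notin> \<Union>D0" using bigD by fastforce+
      then show "gm_rank M (insert d D0) = gm_rank M D0" using cl2 d xy(2) by simp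
    qed
    have R: "gm_rank M (D0 \<union> D1) = gm_rank M D0" using g_R3[OF D0g D1g step1] .
    have step2: "gm_rank M (insert {a,b} D1) = gm_rank M D1"
    proof -
      define g where "g = \<sigma>(u := a, v := b)"
      have ab: "a < m" "b < m" using big by auto
      have "inj_on g (\<Union>C)" unfolding UC
      proof (rule inj_onI)
        fix x y assume xy: "x \<in> insert u (insert v (\<Union>D0))" "y \<in> insert u (insert v (\<Union>D0))" "g x = g y"
        have gu: "g u = a" and gv: "g v = b" using e0(2) unfolding g_def by auto
        have gz: "g z = z + m" if "z \<in> \<Union>D0" for z
        proof -
          have "z \<noteq> u" "z \<noteq> v" using that uv by auto
          then show ?thesis unfolding g_def \<sigma>_def by simp
        qed
        have cx: "x = u \<or> x = v \<or> x \<in> \<Union>D0" "y = u \<or> y = v \<or> y \<in> \<Union>D0" using xy(1,2) by auto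
        show "x = y"
        proof (cases "x \<in> \<Union>D0 \<and> y \<in> \<Union>D0")
          case True
          then show ?thesis using xy(3) gz by simp
        next
          case False
          have "g x \<ge> m" if "x \<in> \<Union>D0" using gz[OF that] by simp
          moreover have "g y \<ge> m" if "y \<in> \<Union>D0" using gz[OF that] by simp
          ultimately show ?thesis using cx xy(3) gu gv ab \<open>a \<noteq> b\<close> False by fastforce
        qed
      qed
      moreover have "(\<lambda>e. g ` e) ` D0 = D1"
      proof -
        have "g ` d = \<sigma> ` d" if "d \<in> D0" for d
        proof -
          have "\<forall>x\<in>d. g x = \<sigma> x" using that uv unfolding g_def by auto
          then show ?thesis by simp
        qed
        then show ?thesis unfolding D1_def by simp
      qed
      ultimately show ?thesis using cl1[of g a b] e0(2) unfolding g_def by simp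
    qed
    have cab: "card {a,b} = 2" using that by simp
    have "gm_rank M (insert {a,b} (D0 \<union> D1)) = gm_rank M (D0 \<union> D1)"
      by (rule g_span_mono[OF is_graph_Un[OF D0g D1g] _ cab step2]) auto
    then have eq: "gm_rank M (insert {a,b} (D0 \<union> D1)) = gm_rank M D0" using R by simp
    have g1: "is_graph (insert {a,b} D0)" using is_graph_insert[OF D0g cab] .
    have g2: "is_graph (insert {a,b} (D0 \<union> D1))" using is_graph_insert[OF is_graph_Un[OF D0g D1g] cab] .
    have "gm_rank M D0 \<le> gm_rank M (insert {a,b} D0)" by (rule g_mono[OF g1]) auto
    moreover have "gm_rank M (insert {a,b} D0) \<le> gm_rank M (insert {a,b} (D0 \<union> D1))"
      by (rule g_mono[OF g2]) auto
    ultimately show ?thesis using eq by simp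
  qed
  have Kg: "is_graph (complete_graph n)" unfolding complete_graph_cgr by (rule is_graph_cgr) simp
  have "\<forall>e\<in>complete_graph n. gm_rank M (insert e D0) = gm_rank M D0"
  proof
    fix e assume "e \<in> complete_graph n"
    then obtain a b where "e = {a,b}" "a \<noteq> b" using edge_2[OF Kg] by blast
    then show "gm_rank M (insert e D0) = gm_rank M D0" using all by simp
  qed
  then have "gm_rank M (D0 \<union> complete_graph n) = gm_rank M D0" using g_R3[OF D0g Kg] by blast
  moreover have "gm_rank M (complete_graph n) \<le> gm_rank M (D0 \<union> complete_graph n)"
    by (rule g_mono[OF is_graph_Un[OF D0g Kg]]) auto
  moreover have "gm_rank M D0 \<le> card D0" using g_le_card[OF D0g] .
  moreover have "card D0 = card C - 1" using C(1,3) unfolding D0_def is_graph_def by simp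
  ultimately show ?thesis by simp
qed

end



lemma forest_subset: assumes "forest F" "C \<subseteq> F" shows "forest C"
proof -
  have g: "is_graph C" using assms is_graph_subset unfolding forest_def by blast
  show ?thesis unfolding forest_def
  proof (intro conjI g notI)
    assume "\<exists>vs. 3 \<le> length vs \<and> distinct vs \<and> (\<forall>i<length vs. {vs ! i, vs ! ((i + 1) mod length vs)} \<in> C)"
    then have "\<exists>vs. 3 \<le> length vs \<and> distinct vs \<and> (\<forall>i<length vs. {vs ! i, vs ! ((i + 1) mod length vs)} \<in> F)"
      using assms(2) by blast
    then show False using assms(1) unfolding forest_def by blast
  qed
qed

lemma matching_forest: assumes "is_graph G" "pairwise disjnt G" shows "forest G"
  unfolding forest_def
proof (intro conjI assms notI)
  assume "\<exists>vs. 3 \<le> length vs \<and> distinct vs \<and> (\<forall>i<length vs. {vs ! i, vs ! ((i + 1) mod length vs)} \<in> G)"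
  then obtain vs where vs: "3 \<le> length vs" "distinct vs"
    "\<forall>i<length vs. {vs ! i, vs ! ((i + 1) mod length vs)} \<in> G" by blast
  define L where "L = length vs"
  have e1: "{vs!0, vs!1} \<in> G"
  proof -
    have "0 < L" "(0 + 1) mod L = 1" using vs(1) L_def by auto
    then show ?thesis using vs(3) L_def by (metis One_nat_def)
  qed
  have e2: "{vs!(L-1), vs!0} \<in> G"
  proof -
    have a: "L - 1 < L" using vs(1) L_def by auto
    have "L - 1 + 1 = L" using vs(1) L_def by auto
    then have b: "(L - 1 + 1) mod L = 0" by simp
    have "{vs ! (L-1), vs ! ((L - 1 + 1) mod L)} \<in> G" using vs(3) a L_def by blast
    then show ?thesis unfolding b .
  qed
  have "{vs!0, vs!1} = {vs!(L-1), vs!0}"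
  proof (rule ccontr)
    assume "{vs!0, vs!1} \<noteq> {vs!(L-1), vs!0}"
    then have "disjnt {vs!0, vs!1} {vs!(L-1), vs!0}" by (rule pairwiseD[OF assms(2) e1 e2])
    then show False unfolding disjnt_def by auto
  qed
  moreover have "vs!0 \<noteq> vs!1"
  proof -
    have "vs \<noteq> []" "1 < length vs" using vs(1) by auto
    then show ?thesis using nth_eq_iff_index_eq[OF vs(2), of 0 1] by simp
  qed
  ultimately have "vs!1 = vs!(L-1)" by (auto simp: doubleton_eq_iff)
  moreover have "1 < L" "L - 1 < L" using vs(1) L_def by auto
  ultimately have "1 = L - 1" using nth_eq_iff_index_eq[OF vs(2), of 1 "L - 1"] L_def by simp
  then show False using vs(1) L_def by simp
qed

lemma leaf_exists:
  assumes "forest C" "C \<noteq> {}"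
  shows "\<exists>u v. {u,v} \<in> C \<and> u \<noteq> v \<and> (\<forall>w. {u,w} \<in> C \<longrightarrow> w = v)"
proof -
  have g: "is_graph C" using assms(1) forest_def by auto
  define P where "P = (\<lambda>vs. distinct vs \<and> length vs \<ge> 2 \<and> (\<forall>i. Suc i < length vs \<longrightarrow> {vs!i, vs!Suc i} \<in> C))"
  obtain e where "e \<in> C" using assms(2) by blast
  then obtain x y where xy: "{x,y} \<in> C" "x \<noteq> y" using edge_2[OF g] by blast
  have P0: "P [x,y]" unfolding P_def using xy by (auto simp: less_Suc_eq)
  have setP: "set vs \<subseteq> \<Union>C" if "P vs" for vs
  proof
    fix z assume "z \<in> set vs"
    then obtain i where i: "i < length vs" "vs ! i = z" by (auto simp: in_set_conv_nth)
    show "z \<in> \<Union>C"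
    proof (cases "Suc i < length vs")
      case True
      then show ?thesis using that i unfolding P_def by blast
    next
      case False
      then have "Suc (i - 1) < length vs" "Suc (i - 1) = i" using i that unfolding P_def by auto
      then have "{vs!(i-1), vs!i} \<in> C" using that unfolding P_def by metis
      then show ?thesis using i by blast
    qed
  qed
  have finU: "finite (\<Union>C)" using is_graph_finite_Union[OF g] .
  have bound: "length vs \<le> card (\<Union>C)" if "P vs" for vs
  proof -
    have "length vs = card (set vs)" using that unfolding P_def by (simp add: distinct_card)
    also have "\<dots> \<le> card (\<Union>C)" using card_mono[OF finU setP[OF that]] .
    finally show ?thesis .
  qed
  obtain vs where vs: "P vs" and maxv: "\<forall>ws. P ws \<longrightarrow> length ws \<le> length vs"
    using ex_has_greatest_nat[of P "[x,y]" length "Suc (card (\<Union>C))"] P0 bound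
    by (metis less_Suc_eq_le)
  have Pv: "distinct vs" "length vs \<ge> 2" "\<forall>i. Suc i < length vs \<longrightarrow> {vs!i, vs!Suc i} \<in> C"
    using vs(1) unfolding P_def by auto
  have uv: "{vs!0, vs!1} \<in> C" using Pv by auto
  have ne: "vs!0 \<noteq> vs!1"
  proof -
    have "vs \<noteq> []" "1 < length vs" using Pv(2) by auto
    then show ?thesis using nth_eq_iff_index_eq[OF Pv(1), of 0 1] by simp
  qed
  have "\<forall>w. {vs!0, w} \<in> C \<longrightarrow> w = vs!1"
  proof (intro allI impI)
    fix w assume w: "{vs!0, w} \<in> C"
    show "w = vs!1"
    proof (cases "w \<in> set vs")
      case False
      have "P (w # vs)" unfolding P_def
      proof (intro conjI allI impI)
        show "distinct (w # vs)" using False Pv by simp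
        show "2 \<le> length (w # vs)" using Pv by simp
        fix i assume i: "Suc i < length (w # vs)"
        show "{(w # vs) ! i, (w # vs) ! Suc i} \<in> C"
        proof (cases i)
          case 0
          then show ?thesis using w by (simp add: insert_commute)
        next
          case (Suc j)
          then show ?thesis using i Pv by simp
        qed
      qed
      then have "length (w # vs) \<le> length vs" using maxv by blast
      then show ?thesis by simp
    next
      case True
      then obtain j where j: "j < length vs" "vs ! j = w" by (auto simp: in_set_conv_nth)
      consider "j = 0" | "j = 1" | "j \<ge> 2" by linarith
      then show ?thesis
      proof cases
        case 1
        then have "card {vs!0, w} = 1" using j by simp
        then show ?thesis using g w unfolding is_graph_def by auto
      next
        case 2
        then show ?thesis using j by simp
      next
        case 3
        define ws where "ws = take (Suc j) vs"
        have lw: "length ws = Suc j" using j ws_def by simp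
        have "\<forall>i<length ws. {ws ! i, ws ! ((i + 1) mod length ws)} \<in> C"
        proof (intro allI impI)
          fix i assume i: "i < length ws"
          show "{ws ! i, ws ! ((i + 1) mod length ws)} \<in> C"
          proof (cases "i < j")
            case True
            then have "(i + 1) mod length ws = Suc i" using lw by simp
            moreover have "ws ! i = vs ! i" "ws ! Suc i = vs ! Suc i" using True ws_def by simp_all
            ultimately show ?thesis using Pv(3) True j(1) by simp
          next
            case False
            then have "i = j" using i lw by simp
            then have "(i + 1) mod length ws = 0" using lw by simp
            moreover have "ws ! i = w" "ws ! 0 = vs ! 0" using \<open>i = j\<close> j ws_def by simp_all
            ultimately show ?thesis using w by (simp add: insert_commute)
          qed
        qed
        moreover have "3 \<le> length ws" "distinct ws" using lw 3 Pv(1) ws_def by simp_all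
        ultimately show ?thesis using assms(1) unfolding forest_def by blast
      qed
    qed
  qed
  then show ?thesis using uv ne by blast
qed



context gmf
begin

lemma forest_bound:
  assumes F: "forest C" "C \<noteq> {}"
    and sp: "\<forall>e\<in>C. gm_rank M (insert e (C - {e})) = gm_rank M (C - {e})"
  shows "\<exists>B. \<forall>n. gm_rank M (complete_graph n) \<le> B"
proof -
  have Cg: "is_graph C" using F(1) forest_def by auto
  obtain u v where uv: "{u,v} \<in> C" "u \<noteq> v" "\<forall>w. {u,w} \<in> C \<longrightarrow> w = v"
    using leaf_exists[OF F] by blast
  define e0 where "e0 = {u,v}"
  define D0 where "D0 = C - {e0}"
  define V where "V = \<Union>C"
  have sp0: "gm_rank M (insert e0 (C - {e0})) = gm_rank M (C - {e0})" using sp uv(1) e0_def by auto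
  have uD0: "u \<notin> \<Union>D0"
  proof
    assume "u \<in> \<Union>D0"
    then obtain d where d: "d \<in> D0" "u \<in> d" by blast
    then have "d \<in> C" "d \<noteq> e0" using D0_def by auto
    then obtain x y where xy: "d = {x,y}" "x \<noteq> y" using edge_2[OF Cg] by blast
    then have "\<exists>w. d = {u,w}" using d(2) by auto
    then obtain w where "d = {u,w}" by blast
    then have "w = v" using uv(3) \<open>d \<in> C\<close> by blast
    then show False using \<open>d = {u,w}\<close> \<open>d \<noteq> e0\<close> e0_def by simp
  qed
  have finV: "finite V" using is_graph_finite_Union[OF Cg] V_def by simp
  have uvV: "u \<in> V" "v \<in> V" using uv(1) V_def by auto
  have D0V: "\<Union>D0 \<subseteq> V - {u}" using uD0 D0_def V_def by auto
  have A: "gm_rank M (insert {a,b} (cgr T)) = gm_rank M (cgr T)"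
    if T: "finite T" "card V \<le> card T" "a \<notin> T" "b \<in> T" for T a b
  proof -
    have c1: "card (V - {u,v}) = card V - 2" using finV uvV uv(2) by (simp add: card_Diff_subset)
    have c2: "card (T - {b}) = card T - 1" using T by simp
    have "card (V - {u,v}) \<le> card (T - {b})" using c1 c2 T(2) by simp
    then obtain h where h: "h ` (V - {u,v}) \<subseteq> T - {b}" "inj_on h (V - {u,v})"
      using card_le_inj[of "V - {u,v}" "T - {b}"] finV T(1) by auto
    define g where "g = h(u := a, v := b)"
    have gu: "g u = a" and gv: "g v = b" using uv(2) unfolding g_def by auto
    have gz: "g z = h z" if "z \<in> V - {u,v}" for z using that unfolding g_def by auto
    have gzT: "g z \<in> T - {b}" if "z \<in> V - {u,v}" for z using gz[OF that] h(1) that by auto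
    have inj: "inj_on g (\<Union>C)"
    proof (rule inj_onI)
      fix x y assume xy: "x \<in> \<Union>C" "y \<in> \<Union>C" "g x = g y"
      have cx: "x = u \<or> x = v \<or> x \<in> V - {u,v}" "y = u \<or> y = v \<or> y \<in> V - {u,v}" using xy(1,2) V_def by auto
      show "x = y"
      proof (cases "x \<in> V - {u,v} \<and> y \<in> V - {u,v}")
        case True
        then show ?thesis using xy(3) gz h(2) by (metis inj_onD)
      next
        case False
        have "g x \<in> T - {b}" if "x \<in> V - {u,v}" using gzT[OF that] .
        moreover have "g y \<in> T - {b}" if "y \<in> V - {u,v}" using gzT[OF that] .
        ultimately show ?thesis using cx xy(3) gu gv T(3,4) False by fastforce
      qed
    qed
    have sub: "(\<lambda>e. g ` e) ` D0 \<subseteq> cgr T"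
    proof
      fix f assume "f \<in> (\<lambda>e. g ` e) ` D0"
      then obtain d where d: "d \<in> D0" "f = g ` d" by blast
      have dV: "d \<subseteq> V - {u}" using d(1) D0V by blast
      have "g ` d \<subseteq> T"
      proof
        fix z assume "z \<in> g ` d"
        then obtain x where x: "x \<in> d" "z = g x" by blast
        show "z \<in> T"
        proof (cases "x = v")
          case True then show ?thesis using x gv T(4) by simp
        next
          case False then have "x \<in> V - {u,v}" using x dV by auto
          then show ?thesis using gzT x by auto
        qed
      qed
      moreover have "card (g ` d) = 2"
      proof -
        have "d \<in> C" using d(1) D0_def by simp
        moreover have "d \<subseteq> \<Union>C" using \<open>d \<in> C\<close> by blast
        ultimately show ?thesis using card_image[OF inj_on_subset[OF inj]] Cg
          unfolding is_graph_def by simp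
      qed
      ultimately show "f \<in> cgr T" using d(2) mem_cgr by simp
    qed
    have "g ` e0 = {a,b}" using gu gv e0_def by simp
    then have "gm_rank M (insert {a,b} ((\<lambda>e. g ` e) ` D0)) = gm_rank M ((\<lambda>e. g ` e) ` D0)"
      using span_img[OF Cg _ sp0 inj] uv(1) e0_def D0_def by simp
    moreover have "a \<noteq> b" using T(3,4) by auto
    then have "card {a,b} = 2" by simp
    ultimately show ?thesis using g_span_mono[OF is_graph_cgr[OF T(1)] sub] by simp
  qed
  define S where "S = {0..<card V}"
  have finS: "finite S" "card S = card V" using S_def by auto
  have Sg: "is_graph (cgr S)" using is_graph_cgr[OF finS(1)] .
  have near: "gm_rank M (insert {a,b} (cgr S)) = gm_rank M (cgr S)"
    if "a \<noteq> b" "a \<in> S \<or> b \<in> S" for a b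
  proof (cases "a \<in> S \<and> b \<in> S")
    case True
    then have "{a,b} \<in> cgr S" using that(1) mem_cgr by auto
    then show ?thesis by (simp add: insert_absorb)
  next
    case False
    show ?thesis
    proof (cases "a \<in> S")
      case True
      then have "b \<notin> S" using False by simp
      then have "gm_rank M (insert {b,a} (cgr S)) = gm_rank M (cgr S)"
        using A[OF finS(1) _ _ True] finS(2) by simp
      then show ?thesis by (simp add: insert_commute)
    next
      case False
      then have "b \<in> S" using that(2) by simp
      then show ?thesis using A[OF finS(1) _ False] finS(2) by simp
    qed
  qed
  have all: "gm_rank M (insert {a,b} (cgr S)) = gm_rank M (cgr S)" if "a \<noteq> b" for a b
  proof (cases "a \<in> S \<or> b \<in> S")
    case True then show ?thesis using near that by blast
  next
    case False
    define T where "T = insert b S"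
    have finT: "finite T" "card T = Suc (card V)" using finS False T_def by auto
    have Tg: "is_graph (cgr T)" using is_graph_cgr[OF finT(1)] .
    have "\<forall>e\<in>cgr T. gm_rank M (insert e (cgr S)) = gm_rank M (cgr S)"
    proof
      fix e assume e: "e \<in> cgr T"
      then obtain x y where xy: "e = {x,y}" "x \<noteq> y" using edge_2[OF Tg] by blast
      have "x \<in> T" "y \<in> T" using e xy mem_cgr by auto
      then have "x \<in> S \<or> y \<in> S" using xy(2) T_def by auto
      then show "gm_rank M (insert e (cgr S)) = gm_rank M (cgr S)" using near xy by blast
    qed
    then have "gm_rank M (cgr S \<union> cgr T) = gm_rank M (cgr S)" using g_R3[OF Sg Tg] by blast
    moreover have "cgr S \<union> cgr T = cgr T" using cgr_mono[of S T] T_def by auto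
    ultimately have r1: "gm_rank M (cgr T) = gm_rank M (cgr S)" by simp
    have "a \<notin> T" "b \<in> T" using False that T_def by auto
    then have r2: "gm_rank M (insert {a,b} (cgr T)) = gm_rank M (cgr T)"
      using A[OF finT(1)] finT(2) by simp
    have cab: "card {a,b} = 2" using that by simp
    have "gm_rank M (cgr S) \<le> gm_rank M (insert {a,b} (cgr S))"
      by (rule g_mono[OF is_graph_insert[OF Sg cab]]) auto
    moreover have "gm_rank M (insert {a,b} (cgr S)) \<le> gm_rank M (insert {a,b} (cgr T))"
      by (rule g_mono[OF is_graph_insert[OF Tg cab]]) (use cgr_mono[of S T] T_def in auto)
    ultimately show ?thesis using r1 r2 by simp
  qed
  have "gm_rank M (complete_graph n) \<le> gm_rank M (cgr S)" for n
  proof -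
    have Kg: "is_graph (complete_graph n)" unfolding complete_graph_cgr by (rule is_graph_cgr) simp
    have "\<forall>e\<in>complete_graph n. gm_rank M (insert e (cgr S)) = gm_rank M (cgr S)"
    proof
      fix e assume "e \<in> complete_graph n"
      then obtain a b where "e = {a,b}" "a \<noteq> b" using edge_2[OF Kg] by blast
      then show "gm_rank M (insert e (cgr S)) = gm_rank M (cgr S)" using all by simp
    qed
    then have "gm_rank M (cgr S \<union> complete_graph n) = gm_rank M (cgr S)" using g_R3[OF Sg Kg] by blast
    moreover have "gm_rank M (complete_graph n) \<le> gm_rank M (cgr S \<union> complete_graph n)"
      by (rule g_mono[OF is_graph_Un[OF Sg Kg]]) auto
    ultimately show ?thesis by simp
  qed
  then show ?thesis by blast
qed

end



theorem lemma2p4: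
  fixes M :: "graph \<Rightarrow> nat set set \<Rightarrow> bool"
  assumes "graph_matroid_family M"
  shows "(gm_unbounded M \<longleftrightarrow> (\<forall>F. forest F \<longrightarrow> gm_independent M F)) \<and>
         (\<not> gm_unbounded M \<longrightarrow>
           (\<forall>G. is_graph G \<and> card G = gm_family_rank M + 1 \<and> pairwise disjnt G
                \<longrightarrow> gm_circuit M G))"
proof -
  interpret gmf M using assms by unfold_locales
  define f where "f = (\<lambda>n. gm_rank M (complete_graph n))"
  have Kg: "is_graph (complete_graph n)" for n unfolding complete_graph_cgr by (rule is_graph_cgr) simp
  have fmono: "f n \<le> f m" if "n \<le> m" for n m
  proof -
    have "complete_graph n \<subseteq> complete_graph m" unfolding complete_graph_cgr using that
      by (intro cgr_mono) auto
    then show ?thesis unfolding f_def by (rule g_mono[OF Kg])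
  qed
  have partA: "gm_unbounded M \<longleftrightarrow> (\<forall>F. forest F \<longrightarrow> gm_independent M F)"
  proof
    assume unb: "gm_unbounded M"
    show "\<forall>F. forest F \<longrightarrow> gm_independent M F"
    proof (intro allI impI)
      fix F assume F: "forest F"
      show "gm_independent M F"
      proof (rule ccontr)
        assume "\<not> gm_independent M F"
        then have nF: "gm_rank M F \<noteq> card F" unfolding gm_independent_def .
        have Fg: "is_graph F" using F forest_def by auto
        obtain C where C: "C \<subseteq> F" "C \<noteq> {}" "gm_rank M C \<noteq> card C"
          "\<forall>e\<in>C. gm_rank M (C - {e}) = card (C - {e})"
          using circuit_exists[OF Fg nF] by blast
        have Cf: "forest C" using forest_subset[OF F C(1)] .
        have Cg: "is_graph C" using Cf forest_def by auto
        have "\<forall>e\<in>C. gm_rank M (insert e (C - {e})) = gm_rank M (C - {e})"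
          using circuit_span[OF Cg C(3) C(4)] by blast
        then obtain B where "\<forall>n. gm_rank M (complete_graph n) \<le> B"
          using forest_bound[OF Cf C(2)] by blast
        then have "bdd_above (range (\<lambda>n. gm_rank M (complete_graph n)))"
          by (auto simp: bdd_above_def)
        then show False using unb unfolding gm_unbounded_def by simp
      qed
    qed
  next
    assume H: "\<forall>F. forest F \<longrightarrow> gm_independent M F"
    show "gm_unbounded M"
      unfolding gm_unbounded_def
    proof
      assume "bdd_above (range (\<lambda>n. gm_rank M (complete_graph n)))"
      then obtain B where B: "\<forall>n. gm_rank M (complete_graph n) \<le> B"
        by (auto simp: bdd_above_def)
      define Mk where "Mk = (\<lambda>i. {2*i, 2*i+1}) ` {..<Suc B}"
      have injk: "inj_on (\<lambda>i::nat. {2*i, 2*i+1}) {..<Suc B}"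
        by (auto simp: inj_on_def doubleton_eq_iff; presburger)
      have cMk: "card Mk = Suc B" unfolding Mk_def using card_image[OF injk] by simp
      have Mkg: "is_graph Mk" unfolding Mk_def is_graph_def by auto
      have Mkp: "pairwise disjnt Mk" unfolding Mk_def pairwise_def disjnt_def by (auto; presburger)
      have "forest Mk" using matching_forest[OF Mkg Mkp] .
      then have "gm_rank M Mk = Suc B" using H cMk unfolding gm_independent_def by simp
      moreover have "Mk \<subseteq> complete_graph (2 * Suc B)"
        unfolding Mk_def complete_graph_cgr mem_cgr by (auto simp: subset_iff mem_cgr)
      then have "gm_rank M Mk \<le> gm_rank M (complete_graph (2 * Suc B))" by (rule g_mono[OF Kg])
      ultimately show False using B by (metis not_less_eq_eq)
    qed
  qed
  have partB: "\<not> gm_unbounded M \<longrightarrow>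
      (\<forall>G. is_graph G \<and> card G = gm_family_rank M + 1 \<and> pairwise disjnt G \<longrightarrow> gm_circuit M G)"
  proof (intro impI allI)
    assume "\<not> gm_unbounded M"
    then have "bdd_above (range f)" unfolding gm_unbounded_def f_def by simp
    then obtain B where B: "\<forall>n. f n \<le> B" by (auto simp: bdd_above_def)
    have "range f \<subseteq> {..B}" using B by auto
    then have fin: "finite (range f)" by (rule finite_subset) simp
    define R where "R = Max (range f)"
    have "R \<in> range f" unfolding R_def using fin by (intro Max_in) auto
    then obtain n0 where n0: "f n0 = R" by auto
    have fle: "f n \<le> R" for n unfolding R_def using fin by (intro Max_ge) auto
    have fR: "f n = R" if "n \<ge> n0" for n using fle[of n] fmono[OF that] n0 by simp
    have "f \<longlonglongrightarrow> R"
      by (rule tendsto_eventually) (use fR in \<open>auto simp: eventually_sequentially\<close>)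
    then have famR: "gm_family_rank M = R" unfolding gm_family_rank_def f_def[symmetric] by (rule limI)
    have indep: "gm_rank M D = card D" if D: "is_graph D" "pairwise disjnt D" "card D \<le> R" for D
    proof (rule ccontr)
      assume nD: "gm_rank M D \<noteq> card D"
      obtain C where C: "C \<subseteq> D" "C \<noteq> {}" "gm_rank M C \<noteq> card C"
        "\<forall>e\<in>C. gm_rank M (C - {e}) = card (C - {e})"
        using circuit_exists[OF D(1) nD] by blast
      have Cg: "is_graph C" using is_graph_subset[OF D(1) C(1)] .
      obtain e0 where e0: "e0 \<in> C" using C(2) by blast
      have sp: "gm_rank M (insert e0 (C - {e0})) = gm_rank M (C - {e0})"
        using circuit_span[OF Cg C(3) C(4) e0] .
      have "f n0 \<le> card C - 1"
        unfolding f_def by (rule matching_bound[OF Cg pairwise_subset[OF D(2) C(1)] e0 sp])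
      moreover have "card C \<le> card D" using C(1) D(1) unfolding is_graph_def by (simp add: card_mono)
      moreover have "card C \<ge> 1" using C(2) Cg unfolding is_graph_def by (simp add: Suc_leI card_gt_0_iff)
      ultimately show False using n0 D(3) by simp
    qed
    fix G assume G: "is_graph G \<and> card G = gm_family_rank M + 1 \<and> pairwise disjnt G"
    then have Gg: "is_graph G" and cG: "card G = R + 1" and Gp: "pairwise disjnt G"
      using famR by auto
    show "gm_circuit M G"
      unfolding gm_circuit_def
    proof
      define V where "V = \<Union>G"
      have finV: "finite V" using is_graph_finite_Union[OF Gg] V_def by simp
      define n where "n = max n0 (card V)"
      have "card V \<le> card {0..<n}" using n_def by simp
      then obtain h where h: "h ` V \<subseteq> {0..<n}" "inj_on h V"
        using card_le_inj[of V "{0..<n}"] finV by auto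
      have "gm_rank M ((\<lambda>e. h ` e) ` G) = gm_rank M G" using g_img(2)[OF Gg] h(2) V_def by simp
      moreover have Hg: "is_graph ((\<lambda>e. h ` e) ` G)" using g_img(1)[OF Gg] h(2) V_def by simp
      moreover have "(\<lambda>e. h ` e) ` G \<subseteq> complete_graph n"
      proof
        fix x assume x: "x \<in> (\<lambda>e. h ` e) ` G"
        then have "card x = 2" using Hg unfolding is_graph_def by blast
        moreover have "x \<subseteq> {0..<n}" using x h(1) V_def by auto
        ultimately show "x \<in> complete_graph n" unfolding complete_graph_cgr mem_cgr by simp
      qed
      ultimately have "gm_rank M G \<le> f n" unfolding f_def using g_mono[OF Kg] by metis
      moreover have "f n = R" using fR n_def by simp
      ultimately show "gm_rank M G < card G" using cG by simp
    next
      show "\<forall>e\<in>G. gm_rank M (G - {e}) = card G - 1"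
      proof
        fix e assume e: "e \<in> G"
        have fG: "finite G" using Gg is_graph_def by simp
        have c: "card (G - {e}) = R" using cG e fG by simp
        have "gm_rank M (G - {e}) = card (G - {e})"
          using indep[OF is_graph_subset[OF Gg] pairwise_subset[OF Gp]] c by auto
        then show "gm_rank M (G - {e}) = card G - 1" using c cG by simp
      qed
    qed
  qed
  show ?thesis using partA partB by blast
qed


end
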